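(* Let $N\ge1$ and let $\mu_N\subset\mathbb{C}^*$ act on $\mathbb{C}^*$ by multiplication. The strict holomorphic endomorphisms of $[\mathbb{C}^*/\mu_N]$ are exactly the pairs $(\widetilde\psi,\sigma)$ with $\sigma(\zeta)=\zeta^m$ and $\widetilde\psi(z)=z^m g(z^N)$, where $m\in\mathbb{Z}$ and $g:\mathbb{C}^*\to\mathbb{C}^*$ is holomorphic. Modulo $2$-isomorphism, $g$ is determined up to multiplication by a constant root of unity.
   Context: For a subgroup $\Gamma\subset\mathbb{C}^*$ acting on $\mathbb{C}^*$ by multiplication, a strict endomorphism of $[\mathbb{C}^*/\Gamma]$ is a pair $(\widetilde\psi,\sigma)$ with $\widetilde\psi:\mathbb{C}^*\to\mathbb{C}^*$ holomorphic and $\sigma:\Gamma\to\Gamma$ a homomorphism such that $\widetilde\psi(\gamma z)=\sigma(\gamma)\widetilde\psi(z)$ for all $\gamma,z$. Two strict pairs $(\widetilde\psi,\sigma)$, $(\widetilde\psi',\sigma)$ are $2$-isomorphic if $\widetilde\psi'=a\widetilde\psi$ for some constant $a\in\Gamma$. $\mu_N$ is the group of $N$-th roots of unity. *)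

theory Defs
  imports "HOL-Complex_Analysis.Complex_Analysis"
begin

definition mu :: "nat \<Rightarrow> complex set" where
  "mu N = {z. z ^ N = 1}"

text \<open>Functions are total in HOL; only
  their values on C* (resp. Gamma) matter.\<close>
definition strict_endo :: "complex set \<Rightarrow> (complex \<Rightarrow> complex) \<Rightarrow> (complex \<Rightarrow> complex) \<Rightarrow> bool" where
  "strict_endo \<Gamma> \<psi> \<sigma> \<longleftrightarrow>
     \<psi> holomorphic_on (- {0}) \<and> (\<forall>z. z \<noteq> 0 \<longrightarrow> \<psi> z \<noteq> 0) \<and>
     (\<forall>\<gamma>\<in>\<Gamma>. \<sigma> \<gamma> \<in> \<Gamma>) \<and>
     (\<forall>a\<in>\<Gamma>. \<forall>b\<in>\<Gamma>. \<sigma> (a * b) = \<sigma> a * \<sigma> b) \<and>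
     (\<forall>\<gamma>\<in>\<Gamma>. \<forall>z. z \<noteq> 0 \<longrightarrow> \<psi> (\<gamma> * z) = \<sigma> \<gamma> * \<psi> z)"

definition two_iso :: "complex set \<Rightarrow> (complex \<Rightarrow> complex) \<Rightarrow> (complex \<Rightarrow> complex) \<Rightarrow> bool" where
  "two_iso \<Gamma> \<psi> \<psi>' \<longleftrightarrow> (\<exists>a\<in>\<Gamma>. \<forall>z. z \<noteq> 0 \<longrightarrow> \<psi>' z = a * \<psi> z)"

end

theory Submission
  imports Defs
begin

definition nroot :: "nat \<Rightarrow> complex \<Rightarrow> complex" where
  "nroot N w = exp (Ln w / of_nat N)"

lemma nroot_pow: "N \<ge> 1 \<Longrightarrow> w \<noteq> 0 \<Longrightarrow> (nroot N w) ^ N = w"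
proof -
  assume "N \<ge> 1" "w \<noteq> 0"
  have "(nroot N w) ^ N = exp (of_nat N * (Ln w / of_nat N))"
    unfolding nroot_def by (rule exp_of_nat_mult[symmetric])
  also have "\<dots> = exp (Ln w)" using \<open>N \<ge> 1\<close> by simp
  also have "\<dots> = w" using \<open>w \<noteq> 0\<close> by simp
  finally show ?thesis .
qed

lemma nroot_nz: "nroot N w \<noteq> 0"
  unfolding nroot_def by simp

lemma roots_are_powers:
  assumes "N \<ge> 1" "\<zeta> ^ N = (1::complex)"
  shows "\<exists>j::nat. \<zeta> = exp (2 * of_real pi * \<i> / of_nat N) ^ j"
proof -
  have "\<zeta> \<in> {z::complex. z^N = 1}" using assms by simp
  then obtain j where "\<zeta> = exp(2 * of_real pi * \<i> * of_nat j / of_nat N)"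
    using complex_roots_unity[OF assms(1)] by auto
  also have "\<dots> = exp (of_nat j * (2 * of_real pi * \<i> / of_nat N))"
    by (simp add: field_simps)
  also have "\<dots> = exp (2 * of_real pi * \<i> / of_nat N) ^ j"
    by (rule exp_of_nat_mult)
  finally show ?thesis by blast
qed

lemma mu_nz_lemma: "N \<ge> 1 \<Longrightarrow> \<gamma> \<in> mu N \<Longrightarrow> \<gamma> \<noteq> 0"
  unfolding mu_def by (auto simp: power_0_left)

lemma sigma_power:
  assumes N: "N \<ge> 1" and se: "strict_endo (mu N) \<psi> \<sigma>"
  shows "\<exists>m::nat. \<forall>\<zeta>\<in>mu N. \<sigma> \<zeta> = \<zeta> ^ m"
proof -
  define z0 where "z0 = exp (2 * of_real pi * \<i> / of_nat N)"
  have z0: "z0 \<in> mu N"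
    using complex_root_unity[of N 1] N unfolding z0_def mu_def by simp
  have maps: "\<forall>\<gamma>\<in>mu N. \<sigma> \<gamma> \<in> mu N" and hom: "\<forall>a\<in>mu N. \<forall>b\<in>mu N. \<sigma> (a * b) = \<sigma> a * \<sigma> b"
    using se unfolding strict_endo_def by auto
  have pw: "\<And>j. z0 ^ j \<in> mu N"
    using z0 unfolding mu_def by (simp add: power_mult[symmetric] mult.commute[of _ N] power_mult)
  have one: "1 \<in> mu N" unfolding mu_def by simp
  have s1: "\<sigma> 1 = 1"
  proof -
    have "\<sigma> 1 = \<sigma> 1 * \<sigma> 1" using hom one by (metis mult_1)
    moreover have "\<sigma> 1 \<noteq> 0" using maps one N mu_nz_lemma by blast
    ultimately show ?thesis by (metis mult_cancel_left mult_1_right)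
  qed
  have ind: "\<sigma> (z0 ^ j) = (\<sigma> z0) ^ j" for j
  proof (induction j)
    case 0 then show ?case using s1 by simp
  next
    case (Suc j)
    have "\<sigma> (z0 ^ Suc j) = \<sigma> (z0 * z0 ^ j)" by simp
    also have "\<dots> = \<sigma> z0 * \<sigma> (z0 ^ j)" using hom z0 pw by blast
    finally show ?case using Suc by simp
  qed
  have "\<sigma> z0 ^ N = 1" using maps z0 unfolding mu_def by auto
  then obtain k where k: "\<sigma> z0 = z0 ^ k" using roots_are_powers[OF N] unfolding z0_def by blast
  have "\<forall>\<zeta>\<in>mu N. \<sigma> \<zeta> = \<zeta> ^ k"
  proof
    fix \<zeta> assume "\<zeta> \<in> mu N"
    then obtain j where j: "\<zeta> = z0 ^ j" using roots_are_powers[OF N] unfolding mu_def z0_def by auto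
    show "\<sigma> \<zeta> = \<zeta> ^ k" using ind[of j] k j by (simp add: power_mult[symmetric] mult.commute)
  qed
  then show ?thesis by blast
qed

lemma inv_eq:
  assumes N: "N \<ge> 1" and inv: "\<And>\<zeta> z. \<zeta> \<in> mu N \<Longrightarrow> z \<noteq> 0 \<Longrightarrow> h (\<zeta> * z) = h z"
    and "u \<noteq> 0" "v \<noteq> 0" "u ^ N = v ^ N"
  shows "h u = (h v :: complex)"
proof -
  have "(u / v) ^ N = 1" using assms by (simp add: power_divide)
  then have "u / v \<in> mu N" unfolding mu_def by simp
  then have "h ((u / v) * v) = h v" using inv assms by blast
  then show ?thesis using assms by simp
qed

lemma descend:
  assumes N: "N \<ge> 1" and hol: "h holomorphic_on (- {0})"
    and inv: "\<And>\<zeta> z. \<zeta> \<in> mu N \<Longrightarrow> z \<noteq> 0 \<Longrightarrow> h (\<zeta> * z) = h z"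
  shows "(\<lambda>w. h (nroot N w)) holomorphic_on (- {0})"
    and "\<And>z. z \<noteq> 0 \<Longrightarrow> h (nroot N (z ^ N)) = h z"
proof -
  show "\<And>z. z \<noteq> 0 \<Longrightarrow> h (nroot N (z ^ N)) = h z"
  proof -
    fix z :: complex assume z: "z \<noteq> 0"
    have "z ^ N \<noteq> 0" using z by simp
    then have "nroot N (z ^ N) ^ N = z ^ N" by (rule nroot_pow[OF N])
    then show "h (nroot N (z ^ N)) = h z" using inv_eq[OF N inv] z nroot_nz by blast
  qed
  show "(\<lambda>w. h (nroot N w)) holomorphic_on (- {0})"
    unfolding holomorphic_on_open[OF open_Compl[OF closed_singleton]]
  proof
    fix w0 :: complex assume "w0 \<in> - {0}"
    then have w0: "w0 \<noteq> 0" by simp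
    define rl where "rl w = exp (Ln w0 / of_nat N) * exp (Ln (w / w0) / of_nat N)" for w
    define B where "B = ball w0 (norm w0)"
    have nB: "w \<in> B \<Longrightarrow> w / w0 \<notin> \<real>\<^sub>\<le>\<^sub>0" for w
    proof
      assume "w \<in> B" "w / w0 \<in> \<real>\<^sub>\<le>\<^sub>0"
      then obtain t where t: "t \<le> 0" "w / w0 = of_real t" unfolding nonpos_Reals_def by auto
      have "norm (w / w0 - 1) < 1"
        using \<open>w \<in> B\<close> w0 unfolding B_def
        by (simp add: dist_norm norm_minus_commute norm_divide divide_simps diff_divide_distrib[symmetric])
      moreover have "norm (of_real t - 1 :: complex) = \<bar>t - 1\<bar>"
        by (metis norm_of_real of_real_1 of_real_diff)
      ultimately show False using t by auto
    qed
    have rlhol: "rl holomorphic_on B"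
      unfolding rl_def by (intro holomorphic_intros) (use nB w0 in auto)
    have rlnz: "rl w \<noteq> 0" for w unfolding rl_def by simp
    have "(h \<circ> rl) holomorphic_on B"
      by (rule holomorphic_on_compose_gen[OF rlhol hol]) (use rlnz in auto)
    moreover have "open B" "w0 \<in> B" unfolding B_def using w0 by auto
    ultimately obtain f' where f': "((h \<circ> rl) has_field_derivative f') (at w0)"
      using holomorphic_on_open by blast
    have eq: "(h \<circ> rl) w = h (nroot N w)" if "w \<in> B" for w
    proof -
      have "w \<noteq> 0" using that unfolding B_def by auto
      have "rl w ^ N = exp (Ln w0 / of_nat N) ^ N * exp (Ln (w / w0) / of_nat N) ^ N"
        unfolding rl_def by (simp add: power_mult_distrib)
      also have "\<dots> = w0 * (w / w0)"
        using nroot_pow[OF N w0] nroot_pow[OF N, of "w/w0"] w0 \<open>w \<noteq> 0\<close> unfolding nroot_def by simp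
      also have "\<dots> = w" using w0 by simp
      finally have "rl w ^ N = nroot N w ^ N" using nroot_pow[OF N \<open>w \<noteq> 0\<close>] by simp
      then show ?thesis using inv_eq[OF N inv] rlnz nroot_nz by simp
    qed
    have "((\<lambda>w. h (nroot N w)) has_field_derivative f') (at w0)"
      by (rule has_field_derivative_transform_within_open[OF f' \<open>open B\<close> \<open>w0 \<in> B\<close>]) (use eq in auto)
    then show "\<exists>f'. ((\<lambda>w. h (nroot N w)) has_field_derivative f') (at w0)" by blast
  qed
qed

theorem mainTheorem9:
  fixes N :: nat
  assumes "N \<ge> 1"
  shows "(\<forall>\<psi> \<sigma>. strict_endo (mu N) \<psi> \<sigma> \<longleftrightarrow>
            (\<exists>m::int. \<exists>g. g holomorphic_on (- {0}) \<and> (\<forall>w. w \<noteq> 0 \<longrightarrow> g w \<noteq> 0) \<and>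
               (\<forall>\<zeta>\<in>mu N. \<sigma> \<zeta> = \<zeta> powi m) \<and>
               (\<forall>z. z \<noteq> 0 \<longrightarrow> \<psi> z = z powi m * g (z ^ N))))
       \<and> (\<forall>(m::int) g g'.
            g holomorphic_on (- {0}) \<and> (\<forall>w. w \<noteq> 0 \<longrightarrow> g w \<noteq> 0) \<and>
            g' holomorphic_on (- {0}) \<and> (\<forall>w. w \<noteq> 0 \<longrightarrow> g' w \<noteq> 0) \<longrightarrow>
            (two_iso (mu N) (\<lambda>z. z powi m * g (z ^ N)) (\<lambda>z. z powi m * g' (z ^ N))
             \<longleftrightarrow> (\<exists>a\<in>mu N. \<forall>w. w \<noteq> 0 \<longrightarrow> g' w = a * g w)))"
proof (intro conjI allI impI iffI)
  note N = assms
  have mu_nz: "\<gamma> \<in> mu N \<Longrightarrow> \<gamma> \<noteq> 0" for \<gamma>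
    using N mu_nz_lemma by blast
  fix \<psi> \<sigma>
  {
    assume se: "strict_endo (mu N) \<psi> \<sigma>"
    obtain m :: nat where m: "\<forall>\<zeta>\<in>mu N. \<sigma> \<zeta> = \<zeta> ^ m"
      using sigma_power[OF N se] by blast
    have hol: "\<psi> holomorphic_on (- {0})" and nz: "\<And>z. z \<noteq> 0 \<Longrightarrow> \<psi> z \<noteq> 0"
      and eqv: "\<And>\<gamma> z. \<gamma> \<in> mu N \<Longrightarrow> z \<noteq> 0 \<Longrightarrow> \<psi> (\<gamma> * z) = \<sigma> \<gamma> * \<psi> z"
      using se unfolding strict_endo_def by auto
    define h where "h z = \<psi> z / z ^ m" for z
    have hhol: "h holomorphic_on (- {0})"
      unfolding h_def by (intro holomorphic_intros hol) auto
    have hinv: "h (\<zeta> * z) = h z" if "\<zeta> \<in> mu N" "z \<noteq> 0" for \<zeta> z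
      using eqv[OF that] m that mu_nz[OF that(1)] unfolding h_def by (simp add: power_mult_distrib)
    define g where "g w = h (nroot N w)" for w
    have ghol: "g holomorphic_on (- {0})" unfolding g_def by (rule descend(1)[OF N hhol hinv])
    have gnz: "\<forall>w. w \<noteq> 0 \<longrightarrow> g w \<noteq> 0" unfolding g_def h_def using nz nroot_nz by simp
    have "\<forall>z. z \<noteq> 0 \<longrightarrow> \<psi> z = z powi (int m) * g (z ^ N)"
    proof (intro allI impI)
      fix z :: complex assume z: "z \<noteq> 0"
      have "g (z ^ N) = h z" unfolding g_def by (rule descend(2)[OF N hhol hinv z])
      then show "\<psi> z = z powi (int m) * g (z ^ N)" using z unfolding h_def by simp
    qed
    moreover have "\<forall>\<zeta>\<in>mu N. \<sigma> \<zeta> = \<zeta> powi (int m)" using m by simp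
    ultimately show "\<exists>m::int. \<exists>g. g holomorphic_on (- {0}) \<and> (\<forall>w. w \<noteq> 0 \<longrightarrow> g w \<noteq> 0) \<and>
               (\<forall>\<zeta>\<in>mu N. \<sigma> \<zeta> = \<zeta> powi m) \<and>
               (\<forall>z. z \<noteq> 0 \<longrightarrow> \<psi> z = z powi m * g (z ^ N))"
      using ghol gnz by blast
  }
  {
    assume "\<exists>m::int. \<exists>g. g holomorphic_on (- {0}) \<and> (\<forall>w. w \<noteq> 0 \<longrightarrow> g w \<noteq> 0) \<and>
               (\<forall>\<zeta>\<in>mu N. \<sigma> \<zeta> = \<zeta> powi m) \<and>
               (\<forall>z. z \<noteq> 0 \<longrightarrow> \<psi> z = z powi m * g (z ^ N))"
    then obtain m :: int and g where ghol: "g holomorphic_on (- {0})"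
      and gnz: "\<forall>w. w \<noteq> 0 \<longrightarrow> g w \<noteq> 0"
      and sig: "\<forall>\<zeta>\<in>mu N. \<sigma> \<zeta> = \<zeta> powi m"
      and psi: "\<forall>z. z \<noteq> 0 \<longrightarrow> \<psi> z = z powi m * g (z ^ N)" by blast
    have h1: "(\<lambda>z. z powi m * g (z ^ N)) holomorphic_on (- {0})"
    proof (intro holomorphic_intros)
      show "(\<lambda>z. g (z ^ N)) holomorphic_on - {0}"
      proof (rule holomorphic_on_compose_gen[of "\<lambda>z. z ^ N" "- {0}" g "- {0}", unfolded o_def])
        show "(\<lambda>z. z ^ N) holomorphic_on - {0}" by (intro holomorphic_intros)
      qed (use ghol in auto)
    qed auto
    have "\<psi> holomorphic_on (- {0})"
      by (rule holomorphic_transform[OF h1]) (use psi in auto)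
    moreover have "\<forall>z. z \<noteq> 0 \<longrightarrow> \<psi> z \<noteq> 0" using psi gnz by simp
    moreover have "\<forall>\<gamma>\<in>mu N. \<sigma> \<gamma> \<in> mu N"
    proof
      fix \<gamma> assume g: "\<gamma> \<in> mu N"
      have "(\<gamma> powi m) ^ N = (\<gamma> ^ N) powi m"
        by (simp add: power_int_power power_int_power' mult.commute)
      then show "\<sigma> \<gamma> \<in> mu N" using g sig unfolding mu_def by simp
    qed
    moreover have "\<forall>a\<in>mu N. \<forall>b\<in>mu N. \<sigma> (a * b) = \<sigma> a * \<sigma> b"
    proof (intro ballI)
      fix a b assume "a \<in> mu N" "b \<in> mu N"
      moreover then have "a * b \<in> mu N" unfolding mu_def by (simp add: power_mult_distrib)
      ultimately show "\<sigma> (a * b) = \<sigma> a * \<sigma> b" using sig by (simp add: power_int_mult_distrib)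
    qed
    moreover have "\<forall>\<gamma>\<in>mu N. \<forall>z. z \<noteq> 0 \<longrightarrow> \<psi> (\<gamma> * z) = \<sigma> \<gamma> * \<psi> z"
    proof (intro ballI allI impI)
      fix \<gamma> z assume g: "\<gamma> \<in> mu N" and z: "(z::complex) \<noteq> 0"
      have gz: "\<gamma> \<noteq> 0" using mu_nz g .
      have "(\<gamma> * z) ^ N = z ^ N" using g unfolding mu_def by (simp add: power_mult_distrib)
      then show "\<psi> (\<gamma> * z) = \<sigma> \<gamma> * \<psi> z"
        using psi gz z g sig by (simp add: power_int_mult_distrib)
    qed
    ultimately show "strict_endo (mu N) \<psi> \<sigma>" unfolding strict_endo_def by blast
  }
next
  fix m :: int and g g' :: "complex \<Rightarrow> complex"
  {
    assume "two_iso (mu N) (\<lambda>z. z powi m * g (z ^ N)) (\<lambda>z. z powi m * g' (z ^ N))"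
    then obtain a where a: "a \<in> mu N"
      and eq: "\<forall>z. z \<noteq> 0 \<longrightarrow> z powi m * g' (z ^ N) = a * (z powi m * g (z ^ N))"
      unfolding two_iso_def by blast
    have "\<forall>w. w \<noteq> 0 \<longrightarrow> g' w = a * g w"
    proof (intro allI impI)
      fix w :: complex assume w: "w \<noteq> 0"
      define z where "z = nroot N w"
      have z: "z \<noteq> 0" "z ^ N = w" unfolding z_def using nroot_nz nroot_pow[OF assms w] by auto
      have "\<forall>z. z \<noteq> 0 \<longrightarrow> g' (z ^ N) = a * g (z ^ N)" using eq by simp
      then show "g' w = a * g w" using z by metis
    qed
    then show "\<exists>a\<in>mu N. \<forall>w. w \<noteq> 0 \<longrightarrow> g' w = a * g w" using a by blast
  }
  {
    assume "\<exists>a\<in>mu N. \<forall>w. w \<noteq> 0 \<longrightarrow> g' w = a * g w"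
    then obtain a where a: "a \<in> mu N" and eq: "\<forall>w. w \<noteq> 0 \<longrightarrow> g' w = a * g w" by blast
    show "two_iso (mu N) (\<lambda>z. z powi m * g (z ^ N)) (\<lambda>z. z powi m * g' (z ^ N))"
      unfolding two_iso_def using a eq by (intro bexI[of _ a]) auto
  }
qed

end
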